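(* Let $c\in\mathbb{N}$. There exists a strategy $\sigma_0$ of player $0$ that is a solution to the NCNS problem with threshold $c$ (i.e., every $\sigma_0$-fixed NE $\sigma$ satisfies $\mathrm{cost}_0(\mathrm{out}(\sigma))\le c$) if and only if there exists a $c$-witness.
   Context: Reachability game with one-player environment: a finite set $V$ of vertices, edges $E\subseteq V\times V$ (each vertex has a successor), initial vertex $v_0$, two players $0$ and $1$ owning a partition $V_0\uplus V_1$ of $V$, weight functions $w_0,w_1:E\to\mathbb{N}$ and target sets $T_0,T_1\subseteq V$. For a play (infinite path) $\pi$, $\mathrm{cost}_i(\pi)$ is the sum of $w_i$ over the edges of the shortest prefix of $\pi$ ending in $T_i$, and $+\infty$ if none. A strategy of player $i$ maps each finite path ending in $V_i$ to a successor of its last vertex. Given $\sigma_0$, a profile $(\sigma_0,\sigma_1)$ is a $\sigma_0$-fixed NE if for every strategy $\tau_1$ of player $1$, $\mathrm{cost}_1(\mathrm{out}(\sigma_0,\sigma_1))\le\mathrm{cost}_1(\mathrm{out}(\sigma_0,\tau_1))$, where $\mathrm{out}$ is the outcome play from $v_0$. A deviation of a play $\pi$ is a finite path $hv$ ($v\in V$) such that $h$ is a nonempty prefix of $\pi$ but $hv$ is not. A $c$-witness is a play $\pi$ from $v_0$ such that $\mathrm{cost}_0(\pi)\le c$ and, with $d=\mathrm{cost}_1(\pi)$, for every deviation $hv$ of $\pi$, player $0$ has a strategy from $v$ in the two-player zero-sum game (player $0$ against player $1$) such that every play $\pi'$ starting at $v$ consistent with it satisfies $\mathrm{cost}_0(h\pi')\le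 c$ or $\mathrm{cost}_1(h\pi')>d$.
   Formalization: The deviations hv of $\pi$ that a c-witness must handle are only those whose prefix h ends in a vertex of $V_1$ (deviations by player 1), not those at player-0 vertices. The paper assumes this as well. *)

theory Defs
  imports Main "HOL-Library.Extended_Nat"
begin

record 'v game =
  verts :: "'v set"
  edges :: "('v \<times> 'v) set"
  init  :: 'v
  own0  :: "'v set"
  own1  :: "'v set"
  wt0   :: "'v \<times> 'v \<Rightarrow> nat"
  wt1   :: "'v \<times> 'v \<Rightarrow> nat"
  tgt0  :: "'v set"
  tgt1  :: "'v set"

definition wf_game :: "'v game \<Rightarrow> bool" where
  "wf_game G \<longleftrightarrow> finite (verts G) \<and> edges G \<subseteq> verts G \<times> verts G
     \<and> (\<forall>v\<in>verts G. \<exists>u. (v, u) \<in> edges G) \<and> init G \<in> verts G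
     \<and> own0 G \<inter> own1 G = {} \<and> own0 G \<union> own1 G = verts G
     \<and> tgt0 G \<subseteq> verts G \<and> tgt1 G \<subseteq> verts G"

definition is_path :: "'v game \<Rightarrow> 'v list \<Rightarrow> bool" where
  "is_path G xs \<longleftrightarrow> xs \<noteq> [] \<and> set xs \<subseteq> verts G
     \<and> (\<forall>i. Suc i < length xs \<longrightarrow> (xs ! i, xs ! Suc i) \<in> edges G)"

definition is_play :: "'v game \<Rightarrow> (nat \<Rightarrow> 'v) \<Rightarrow> bool" where
  "is_play G \<pi> \<longleftrightarrow> (\<forall>n. \<pi> n \<in> verts G \<and> (\<pi> n, \<pi> (Suc n)) \<in> edges G)"

text \<open>Prefix of length \<open>n+1\<close> of a play.\<close>
definition pref :: "(nat \<Rightarrow> 'v) \<Rightarrow> nat \<Rightarrow> 'v list" where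
  "pref \<pi> n = map \<pi> [0..<Suc n]"

definition conc :: "'v list \<Rightarrow> (nat \<Rightarrow> 'v) \<Rightarrow> nat \<Rightarrow> 'v" where
  "conc h \<pi> n = (if n < length h then h ! n else \<pi> (n - length h))"

definition cost :: "('v \<times> 'v \<Rightarrow> nat) \<Rightarrow> 'v set \<Rightarrow> (nat \<Rightarrow> 'v) \<Rightarrow> enat" where
  "cost w T \<pi> = (if \<exists>n. \<pi> n \<in> T
      then enat (\<Sum>k < (LEAST n. \<pi> n \<in> T). w (\<pi> k, \<pi> (Suc k)))
      else \<infinity>)"

definition cost0 :: "'v game \<Rightarrow> (nat \<Rightarrow> 'v) \<Rightarrow> enat" where
  "cost0 G \<pi> = cost (wt0 G) (tgt0 G) \<pi>"

definition cost1 :: "'v game \<Rightarrow> (nat \<Rightarrow> 'v) \<Rightarrow> enat" where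
  "cost1 G \<pi> = cost (wt1 G) (tgt1 G) \<pi>"

definition is_strategy :: "'v game \<Rightarrow> 'v set \<Rightarrow> ('v list \<Rightarrow> 'v) \<Rightarrow> bool" where
  "is_strategy G Vi \<sigma> \<longleftrightarrow> (\<forall>h. is_path G h \<and> last h \<in> Vi \<longrightarrow> (last h, \<sigma> h) \<in> edges G)"

definition consistent :: "'v set \<Rightarrow> ('v list \<Rightarrow> 'v) \<Rightarrow> (nat \<Rightarrow> 'v) \<Rightarrow> bool" where
  "consistent Vi \<sigma> \<pi> \<longleftrightarrow> (\<forall>n. \<pi> n \<in> Vi \<longrightarrow> \<pi> (Suc n) = \<sigma> (pref \<pi> n))"

primrec outh :: "'v game \<Rightarrow> ('v list \<Rightarrow> 'v) \<Rightarrow> ('v list \<Rightarrow> 'v) \<Rightarrow> nat \<Rightarrow> 'v list" where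
  "outh G \<sigma>0 \<sigma>1 0 = [init G]"
| "outh G \<sigma>0 \<sigma>1 (Suc n) =
     (let h = outh G \<sigma>0 \<sigma>1 n in h @ [if last h \<in> own0 G then \<sigma>0 h else \<sigma>1 h])"

definition out :: "'v game \<Rightarrow> ('v list \<Rightarrow> 'v) \<Rightarrow> ('v list \<Rightarrow> 'v) \<Rightarrow> nat \<Rightarrow> 'v" where
  "out G \<sigma>0 \<sigma>1 n = last (outh G \<sigma>0 \<sigma>1 n)"

definition fixed_NE :: "'v game \<Rightarrow> ('v list \<Rightarrow> 'v) \<Rightarrow> ('v list \<Rightarrow> 'v) \<Rightarrow> bool" where
  "fixed_NE G \<sigma>0 \<sigma>1 \<longleftrightarrow> is_strategy G (own1 G) \<sigma>1 \<and>
     (\<forall>\<tau>1. is_strategy G (own1 G) \<tau>1 \<longrightarrow>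
        cost1 G (out G \<sigma>0 \<sigma>1) \<le> cost1 G (out G \<sigma>0 \<tau>1))"

definition NCNS_solution :: "'v game \<Rightarrow> nat \<Rightarrow> ('v list \<Rightarrow> 'v) \<Rightarrow> bool" where
  "NCNS_solution G c \<sigma>0 \<longleftrightarrow> is_strategy G (own0 G) \<sigma>0 \<and>
     (\<forall>\<sigma>1. fixed_NE G \<sigma>0 \<sigma>1 \<longrightarrow> cost0 G (out G \<sigma>0 \<sigma>1) \<le> enat c)"

text \<open>Deviation \<open>h v\<close> of \<open>\<pi>\<close> with \<open>h = pref \<pi> n\<close>: a finite path, \<open>h v\<close> not a prefix
  of \<open>\<pi>\<close> (i.e. \<open>v \<noteq> \<pi> (n+1)\<close>), taken by player 1 (\<open>last h \<in> V1\<close>).\<close>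
definition is_deviation :: "'v game \<Rightarrow> (nat \<Rightarrow> 'v) \<Rightarrow> nat \<Rightarrow> 'v \<Rightarrow> bool" where
  "is_deviation G \<pi> n v \<longleftrightarrow> is_path G (pref \<pi> n @ [v]) \<and> v \<noteq> \<pi> (Suc n) \<and> \<pi> n \<in> own1 G"

definition witness :: "'v game \<Rightarrow> nat \<Rightarrow> (nat \<Rightarrow> 'v) \<Rightarrow> bool" where
  "witness G c \<pi> \<longleftrightarrow> is_play G \<pi> \<and> \<pi> 0 = init G \<and> cost0 G \<pi> \<le> enat c \<and>
     (\<forall>n v. is_deviation G \<pi> n v \<longrightarrow>
        (\<exists>\<tau>. is_strategy G (own0 G) \<tau> \<and>
           (\<forall>\<pi>'. is_play G \<pi>' \<and> \<pi>' 0 = v \<and> consistent (own0 G) \<tau> \<pi>' \<longrightarrow>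
              cost0 G (conc (pref \<pi> n) \<pi>') \<le> enat c \<or>
              cost1 G (conc (pref \<pi> n) \<pi>') > cost1 G \<pi>)))"

end

theory Submission
  imports Defs
begin

definition succ :: "'v game \<Rightarrow> 'v \<Rightarrow> 'v" where
  "succ G u = (SOME w. (u, w) \<in> edges G)"

definition follow :: "'v game \<Rightarrow> (nat \<Rightarrow> 'v) \<Rightarrow> 'v list \<Rightarrow> 'v" where
  "follow G \<rho> h = (if h = pref \<rho> (length h - 1) then \<rho> (length h) else succ G (last h))"

lemma succ_edge: "wf_game G \<Longrightarrow> u \<in> verts G \<Longrightarrow> (u, succ G u) \<in> edges G"
  unfolding succ_def wf_game_def by (meson someI_ex)

lemma length_pref[simp]: "length (pref \<rho> n) = Suc n"
  by (simp add: pref_def)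

lemma nth_pref[simp]: "k \<le> n \<Longrightarrow> pref \<rho> n ! k = \<rho> k"
  unfolding pref_def by (subst nth_map_upt) auto

lemma last_pref[simp]: "last (pref \<rho> n) = \<rho> n"
  by (simp add: pref_def)

lemma pref_ne[simp]: "pref \<rho> n \<noteq> []"
  by (simp add: pref_def)

lemma pref_Suc: "pref \<rho> (Suc n) = pref \<rho> n @ [\<rho> (Suc n)]"
  by (simp add: pref_def)

lemma pref_cong: "(\<And>k. k \<le> n \<Longrightarrow> f k = g k) \<Longrightarrow> pref f n = pref g n"
  by (simp add: pref_def)

lemma path_pref: "is_play G \<rho> \<Longrightarrow> is_path G (pref \<rho> n)"
  unfolding is_path_def is_play_def
proof (intro conjI allI impI)
  assume p: "\<forall>n. \<rho> n \<in> verts G \<and> (\<rho> n, \<rho> (Suc n)) \<in> edges G"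
  show "pref \<rho> n \<noteq> []" by simp
  show "set (pref \<rho> n) \<subseteq> verts G" using p by (auto simp: pref_def)
  fix i assume "Suc i < length (pref \<rho> n)"
  then show "(pref \<rho> n ! i, pref \<rho> n ! Suc i) \<in> edges G" using p by simp
qed

lemma path_last: "is_path G h \<Longrightarrow> last h \<in> verts G"
  unfolding is_path_def by auto

lemma outh_len: "length (outh G s0 s1 n) = Suc n"
  by (induction n) (auto simp: Let_def)

lemma outh_pref: "outh G s0 s1 n = pref (out G s0 s1) n"
proof (induction n)
  case 0 then show ?case by (simp add: pref_def out_def)
next
  case (Suc n)
  define x where "x = (if last (outh G s0 s1 n) \<in> own0 G then s0 (outh G s0 s1 n) else s1 (outh G s0 s1 n))"
  have e: "outh G s0 s1 (Suc n) = outh G s0 s1 n @ [x]" by (simp add: Let_def x_def)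
  have o: "out G s0 s1 (Suc n) = x" unfolding out_def e by simp
  have "pref (out G s0 s1) (Suc n) = pref (out G s0 s1) n @ [x]" using pref_Suc[of "out G s0 s1" n] o by simp
  then show ?case using e Suc.IH by simp
qed

lemma out_0: "out G s0 s1 0 = init G" by (simp add: out_def)

lemma out_Suc: "out G s0 s1 (Suc n) = (if out G s0 s1 n \<in> own0 G then s0 (pref (out G s0 s1) n)
   else s1 (pref (out G s0 s1) n))"
proof -
  have l: "last (outh G s0 s1 n) = out G s0 s1 n" by (simp only: out_def)
  have "out G s0 s1 (Suc n) = last (outh G s0 s1 (Suc n))" by (simp only: out_def)
  also have "\<dots> = (if last (outh G s0 s1 n) \<in> own0 G then s0 (outh G s0 s1 n) else s1 (outh G s0 s1 n))"
    by (simp add: Let_def)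
  finally show ?thesis unfolding outh_pref last_pref .
qed

lemma out_eq:
  assumes "\<rho> 0 = init G"
    and "\<And>n. \<rho> (Suc n) = (if \<rho> n \<in> own0 G then s0 (pref \<rho> n) else s1 (pref \<rho> n))"
  shows "out G s0 s1 = \<rho>"
proof
  fix n show "out G s0 s1 n = \<rho> n"
  proof (induction n rule: less_induct)
    case (less n)
    show ?case
    proof (cases n)
      case 0 then show ?thesis using assms out_0 by simp
    next
      case (Suc m)
      have "pref (out G s0 s1) m = pref \<rho> m" by (rule pref_cong) (use less Suc in auto)
      moreover have "out G s0 s1 m = \<rho> m" using less Suc by auto
      moreover have "out G s0 s1 (Suc m) = (if out G s0 s1 m \<in> own0 G then s0 (pref (out G s0 s1) m)
   else s1 (pref (out G s0 s1) m))" by (rule out_Suc)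
      ultimately show ?thesis using Suc assms(2)[of m] by simp
    qed
  qed
qed

lemma out_consistent: "consistent (own0 G) s0 (out G s0 s1)"
  unfolding consistent_def
proof (intro allI impI)
  fix n assume "out G s0 s1 n \<in> own0 G"
  then show "out G s0 s1 (Suc n) = s0 (pref (out G s0 s1) n)" using out_Suc[of G s0 s1 n] by simp
qed

lemma out_play:
  assumes "wf_game G" "is_strategy G (own0 G) s0" "is_strategy G (own1 G) s1"
  shows "is_play G (out G s0 s1)"
proof -
  have "is_path G (pref (out G s0 s1) n)" for n
  proof (induction n)
    case 0 then show ?case using assms(1) by (simp add: pref_def out_0 is_path_def wf_game_def)
  next
    case (Suc n)
    let ?o = "out G s0 s1"
    have lv: "?o n \<in> verts G" using path_last[OF Suc] by simp
    have e: "(?o n, ?o (Suc n)) \<in> edges G"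
    proof (cases "?o n \<in> own0 G")
      case True
      then show ?thesis using assms(2) Suc out_Suc[of G s0 s1 n] unfolding is_strategy_def by auto
    next
      case False
      then have "?o n \<in> own1 G" using lv assms(1) unfolding wf_game_def by auto
      then show ?thesis using False assms(3) Suc out_Suc[of G s0 s1 n] unfolding is_strategy_def by auto
    qed
    then have "?o (Suc n) \<in> verts G" using assms(1) unfolding wf_game_def by auto
    then have vS: "?o (Suc n) \<in> verts G" .
    show ?case unfolding is_path_def
    proof (intro conjI allI impI)
      show "pref ?o (Suc n) \<noteq> []" by simp
      show "set (pref ?o (Suc n)) \<subseteq> verts G" using Suc vS by (simp add: pref_Suc is_path_def)
      fix i assume "Suc i < length (pref ?o (Suc n))"
      then have i: "i \<le> n" by simp
      show "(pref ?o (Suc n) ! i, pref ?o (Suc n) ! Suc i) \<in> edges G"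
      proof (cases "i = n")
        case True then show ?thesis using e by simp
      next
        case False then have "Suc i < length (pref ?o n)" using i by simp
        then have "(pref ?o n ! i, pref ?o n ! Suc i) \<in> edges G" using Suc unfolding is_path_def by blast
        then show ?thesis using i False by simp
      qed
    qed
  qed
  note P = this
  show ?thesis unfolding is_play_def
  proof
    fix n
    have "out G s0 s1 n \<in> verts G" using path_last[OF P[of n]] by simp
    moreover have "(pref (out G s0 s1) (Suc n) ! n, pref (out G s0 s1) (Suc n) ! Suc n) \<in> edges G"
      using P[of "Suc n"] unfolding is_path_def by simp
    ultimately show "out G s0 s1 n \<in> verts G \<and> (out G s0 s1 n, out G s0 s1 (Suc n)) \<in> edges G" by simp
  qed
qed

lemma follow_strategy:
  assumes "wf_game G" "is_play G \<rho>"
  shows "is_strategy G V (follow G \<rho>)"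
  unfolding is_strategy_def
proof (intro allI impI)
  fix h assume h: "is_path G h \<and> last h \<in> V"
  show "(last h, follow G \<rho> h) \<in> edges G"
  proof (cases "h = pref \<rho> (length h - 1)")
    case True
    obtain k where k: "length h = Suc k" using h unfolding is_path_def by (cases h) auto
    have hk: "h = pref \<rho> k" using True unfolding k diff_Suc_1 .
    have "last h = \<rho> k" using hk by simp
    moreover have f: "follow G \<rho> h = \<rho> (Suc k)" unfolding follow_def k diff_Suc_1 using hk by simp
    moreover have "(\<rho> k, \<rho> (Suc k)) \<in> edges G"
      using assms(2) unfolding is_play_def by blast
    ultimately show ?thesis by simp
  next
    case False
    then show ?thesis using succ_edge[OF assms(1) path_last] h unfolding follow_def by simp
  qed
qed

lemma out_follow:
  assumes "\<rho> 0 = init G" "consistent (own0 G) s0 \<rho>"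
  shows "out G s0 (follow G \<rho>) = \<rho>"
proof (rule out_eq)
  show "\<rho> 0 = init G" by fact
  fix n
  show "\<rho> (Suc n) = (if \<rho> n \<in> own0 G then s0 (pref \<rho> n) else follow G \<rho> (pref \<rho> n))"
    using assms(2) unfolding consistent_def follow_def by simp
qed

lemma conc_lt: "j < length h \<Longrightarrow> conc h \<pi> j = h ! j"
  by (simp add: conc_def)

lemma conc_ge: "conc h \<pi> (length h + k) = \<pi> k"
  by (simp add: conc_def)

lemma pref_conc: "pref (conc h \<pi>) (length h + k) = h @ pref \<pi> k"
proof (rule nth_equalityI)
  show "length (pref (conc h \<pi>) (length h + k)) = length (h @ pref \<pi> k)" by simp
  fix i assume "i < length (pref (conc h \<pi>) (length h + k))"
  then have i: "i \<le> length h + k" by simp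
  show "pref (conc h \<pi>) (length h + k) ! i = (h @ pref \<pi> k) ! i"
  proof (cases "i < length h")
    case True then show ?thesis using i by (simp add: conc_lt nth_append)
  next
    case False
    then obtain j where j: "i = length h + j" by (metis le_Suc_ex not_less)
    then show ?thesis using i by (simp add: conc_ge nth_append)
  qed
qed

lemma drop_pref: "drop m (pref \<rho> (m + k)) = pref (\<lambda>j. \<rho> (m + j)) k"
proof (rule nth_equalityI)
  show "length (drop m (pref \<rho> (m + k))) = length (pref (\<lambda>j. \<rho> (m + j)) k)" by simp
  fix i assume "i < length (drop m (pref \<rho> (m + k)))"
  then show "drop m (pref \<rho> (m + k)) ! i = pref (\<lambda>j. \<rho> (m + j)) k ! i" by simp
qed

lemma path_drop:
  assumes "is_path G h" "m < length h"
  shows "is_path G (drop m h)"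
  unfolding is_path_def
proof (intro conjI allI impI)
  show "drop m h \<noteq> []" using assms(2) by simp
  show "set (drop m h) \<subseteq> verts G" using assms(1) set_drop_subset unfolding is_path_def by fast
  fix i assume i: "Suc i < length (drop m h)"
  then have "Suc (m + i) < length h" by simp
  then have "(h ! (m + i), h ! Suc (m + i)) \<in> edges G" using assms(1) unfolding is_path_def by blast
  then show "(drop m h ! i, drop m h ! Suc i) \<in> edges G" using i assms(2) by simp
qed

definition wprop :: "'v game \<Rightarrow> nat \<Rightarrow> (nat \<Rightarrow> 'v) \<Rightarrow> nat \<Rightarrow> 'v \<Rightarrow> ('v list \<Rightarrow> 'v) \<Rightarrow> bool" where
  "wprop G c \<pi> n v \<tau> \<longleftrightarrow> is_strategy G (own0 G) \<tau> \<and>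
           (\<forall>\<pi>'. is_play G \<pi>' \<and> \<pi>' 0 = v \<and> consistent (own0 G) \<tau> \<pi>' \<longrightarrow>
              cost0 G (conc (pref \<pi> n) \<pi>') \<le> enat c \<or>
              cost1 G (conc (pref \<pi> n) \<pi>') > cost1 G \<pi>)"

definition tauS :: "'v game \<Rightarrow> nat \<Rightarrow> (nat \<Rightarrow> 'v) \<Rightarrow> nat \<Rightarrow> 'v \<Rightarrow> 'v list \<Rightarrow> 'v" where
  "tauS G c \<pi> n v = (SOME \<tau>. wprop G c \<pi> n v \<tau>)"

definition sig0 :: "'v game \<Rightarrow> nat \<Rightarrow> (nat \<Rightarrow> 'v) \<Rightarrow> 'v list \<Rightarrow> 'v" where
  "sig0 G c \<pi> h = (if \<forall>i<length h. h ! i = \<pi> i then \<pi> (length h)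
     else (let m = (LEAST i. i < length h \<and> h ! i \<noteq> \<pi> i) in
       if 0 < m \<and> is_deviation G \<pi> (m - 1) (h ! m) then tauS G c \<pi> (m - 1) (h ! m) (drop m h)
       else succ G (last h)))"

lemma sig0_else:
  assumes "\<not> (\<forall>i<length h. h ! i = \<pi> i)"
  shows "sig0 G c \<pi> h = (let m = (LEAST i. i < length h \<and> h ! i \<noteq> \<pi> i) in
       if 0 < m \<and> is_deviation G \<pi> (m - 1) (h ! m) then tauS G c \<pi> (m - 1) (h ! m) (drop m h)
       else succ G (last h))"
  unfolding sig0_def by (rule if_not_P[OF assms])

lemma tauS_prop:
  assumes "witness G c \<pi>" "is_deviation G \<pi> n v"
  shows "wprop G c \<pi> n v (tauS G c \<pi> n v)"
proof -
  have "\<exists>\<tau>. wprop G c \<pi> n v \<tau>"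
    unfolding wprop_def
    by (rule assms(1)[unfolded witness_def, THEN conjunct2, THEN conjunct2, THEN conjunct2, rule_format, OF assms(2)])
  then show ?thesis unfolding tauS_def by (rule someI_ex)
qed

lemma sig0_strategy:
  assumes wf: "wf_game G" and w: "witness G c \<pi>"
  shows "is_strategy G (own0 G) (sig0 G c \<pi>)"
  unfolding is_strategy_def
proof (intro allI impI)
  fix h assume h: "is_path G h \<and> last h \<in> own0 G"
  have pl: "is_play G \<pi>" using w unfolding witness_def by simp
  have hne: "h \<noteq> []" using h unfolding is_path_def by simp
  show "(last h, sig0 G c \<pi> h) \<in> edges G"
  proof (cases "\<forall>i<length h. h ! i = \<pi> i")
    case True
    obtain k where k: "length h = Suc k" using hne by (cases h) auto
    have hk: "h = pref \<pi> k"
      by (rule nth_equalityI) (use True k in auto)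
    have "last h = \<pi> k" using hk by simp
    moreover have "sig0 G c \<pi> h = \<pi> (Suc k)" using True k unfolding sig0_def by simp
    moreover have "(\<pi> k, \<pi> (Suc k)) \<in> edges G"
      using pl unfolding is_play_def by blast
    ultimately show ?thesis by simp
  next
    case False
    define m where "m = (LEAST i. i < length h \<and> h ! i \<noteq> \<pi> i)"
    have exi: "\<exists>i. i < length h \<and> h ! i \<noteq> \<pi> i" using False by blast
    have ml: "m < length h" using LeastI_ex[OF exi] unfolding m_def by blast
    show ?thesis
    proof (cases "0 < m \<and> is_deviation G \<pi> (m - 1) (h ! m)")
      case True
      then have "wprop G c \<pi> (m - 1) (h ! m) (tauS G c \<pi> (m - 1) (h ! m))" using tauS_prop[OF w, of "m - 1" "h ! m"] True by simp
      then have st: "is_strategy G (own0 G) (tauS G c \<pi> (m - 1) (h ! m))" unfolding wprop_def by simp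
      have "is_path G (drop m h)" using path_drop h ml by blast
      moreover have "last (drop m h) = last h" using ml by simp
      ultimately have "(last (drop m h), tauS G c \<pi> (m - 1) (h ! m) (drop m h)) \<in> edges G"
        using st[unfolded is_strategy_def, rule_format, of "drop m h"] h by simp
      then have "(last h, tauS G c \<pi> (m - 1) (h ! m) (drop m h)) \<in> edges G"
        using \<open>last (drop m h) = last h\<close> by simp
      then show ?thesis using sig0_else[OF False, of G c] True unfolding m_def[symmetric] Let_def by simp
    next
      case F2: False
      have e: "sig0 G c \<pi> h = (if 0 < m \<and> is_deviation G \<pi> (m - 1) (h ! m) then tauS G c \<pi> (m - 1) (h ! m) (drop m h)
       else succ G (last h))" using sig0_else[OF False, of G c] unfolding m_def[symmetric] Let_def .
      show ?thesis unfolding e if_not_P[OF F2] using succ_edge[OF wf path_last] h by simp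
    qed
  qed
qed

lemma sig0_cons:
  assumes "\<pi> n \<in> own0 G"
  shows "\<pi> (Suc n) = sig0 G c \<pi> (pref \<pi> n)"
  unfolding sig0_def by simp

lemma bwd:
  assumes wf: "wf_game G" and w: "witness G c \<pi>"
  shows "NCNS_solution G c (sig0 G c \<pi>)"
  unfolding NCNS_solution_def
proof (intro conjI allI impI)
  let ?s = "sig0 G c \<pi>"
  show st0: "is_strategy G (own0 G) ?s" using sig0_strategy[OF wf w] .
  fix \<sigma>1 assume NE: "fixed_NE G ?s \<sigma>1"
  let ?\<rho> = "out G ?s \<sigma>1"
  have pl: "is_play G \<pi>" and p0: "\<pi> 0 = init G" and c0: "cost0 G \<pi> \<le> enat c"
    using w unfolding witness_def by auto
  have cpi: "consistent (own0 G) ?s \<pi>" unfolding consistent_def using sig0_cons by metis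
  have "out G ?s (follow G \<pi>) = \<pi>" using out_follow[OF p0 cpi] .
  moreover have "is_strategy G (own1 G) (follow G \<pi>)" using follow_strategy[OF wf pl] .
  ultimately have le: "cost1 G ?\<rho> \<le> cost1 G \<pi>" using NE unfolding fixed_NE_def by metis
  have st1: "is_strategy G (own1 G) \<sigma>1" using NE unfolding fixed_NE_def by simp
  have rpl: "is_play G ?\<rho>" using out_play[OF wf st0 st1] .
  have rc: "consistent (own0 G) ?s ?\<rho>" by (rule out_consistent)
  show "cost0 G ?\<rho> \<le> enat c"
  proof (cases "?\<rho> = \<pi>")
    case True then show ?thesis using c0 by simp
  next
    case False
    then have ex: "\<exists>i. ?\<rho> i \<noteq> \<pi> i" by auto
    define m where "m = (LEAST i. ?\<rho> i \<noteq> \<pi> i)"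
    have mneq: "?\<rho> m \<noteq> \<pi> m" unfolding m_def using LeastI_ex[OF ex] .
    have below: "\<And>j. j < m \<Longrightarrow> ?\<rho> j = \<pi> j" unfolding m_def using not_less_Least by blast
    have "m \<noteq> 0" using mneq p0 out_0 by metis
    then obtain n where mn: "m = Suc n" using not0_implies_Suc by blast
    have rn: "?\<rho> n = \<pi> n" using below mn by simp
    have prn: "pref ?\<rho> n = pref \<pi> n" by (rule pref_cong) (use below mn in simp)
    have own1: "\<pi> n \<in> own1 G"
    proof (rule ccontr)
      assume "\<pi> n \<notin> own1 G"
      moreover have "\<pi> n \<in> verts G" using pl unfolding is_play_def by simp
      ultimately have o0: "\<pi> n \<in> own0 G" using wf unfolding wf_game_def by auto
      then have "?\<rho> (Suc n) = ?s (pref ?\<rho> n)" using rc rn unfolding consistent_def by simp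
      also have "\<dots> = \<pi> (Suc n)" using prn sig0_cons[of \<pi> n G c, OF o0] by simp
      finally show False using mneq mn by simp
    qed
    have "pref \<pi> n @ [?\<rho> m] = pref ?\<rho> m" using prn mn by (simp add: pref_Suc)
    then have dev: "is_deviation G \<pi> n (?\<rho> m)"
      unfolding is_deviation_def using path_pref[OF rpl] mneq mn own1 by simp
    define \<tau> where "\<tau> = tauS G c \<pi> n (?\<rho> m)"
    have wp: "wprop G c \<pi> n (?\<rho> m) \<tau>" using tauS_prop[OF w dev] unfolding \<tau>_def .
    define \<pi>' where "\<pi>' = (\<lambda>k. ?\<rho> (m + k))"
    have ppl: "is_play G \<pi>'" using rpl unfolding is_play_def \<pi>'_def by simp
    have pp0: "\<pi>' 0 = ?\<rho> m" unfolding \<pi>'_def by simp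
    have pcons: "consistent (own0 G) \<tau> \<pi>'"
      unfolding consistent_def
    proof (intro allI impI)
      fix k assume "\<pi>' k \<in> own0 G"
      then have "?\<rho> (Suc (m + k)) = ?s (pref ?\<rho> (m + k))" using rc unfolding consistent_def \<pi>'_def by simp
      define h where "h = pref ?\<rho> (m + k)"
      have nall: "\<not> (\<forall>i<length h. h ! i = \<pi> i)"
        using mneq unfolding h_def by (metis le_add1 length_pref less_Suc_eq_le nth_pref)
      have lm: "(LEAST i. i < length h \<and> h ! i \<noteq> \<pi> i) = m"
      proof (rule Least_equality)
        show "m < length h \<and> h ! m \<noteq> \<pi> m" using mneq unfolding h_def by simp
        fix y assume "y < length h \<and> h ! y \<noteq> \<pi> y"
        then have "?\<rho> y \<noteq> \<pi> y" unfolding h_def by (auto simp: less_Suc_eq_le)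
        then show "m \<le> y" unfolding m_def by (rule Least_le)
      qed
      have hm: "h ! m = ?\<rho> m" unfolding h_def by simp
      have "?s h = \<tau> (drop m h)"
        using sig0_else[OF nall, of G c] lm hm dev mn unfolding \<tau>_def Let_def by simp
      also have "drop m h = pref \<pi>' k" unfolding h_def \<pi>'_def by (rule drop_pref)
      finally show "\<pi>' (Suc k) = \<tau> (pref \<pi>' k)"
        using \<open>?\<rho> (Suc (m + k)) = ?s (pref ?\<rho> (m + k))\<close> unfolding \<pi>'_def h_def by simp
    qed
    have ceq: "conc (pref \<pi> n) \<pi>' = ?\<rho>"
    proof
      fix j
      show "conc (pref \<pi> n) \<pi>' j = ?\<rho> j"
      proof (cases "j < m")
        case True then show ?thesis using below mn by (simp add: conc_def)
      next
        case False then show ?thesis using mn by (simp add: conc_def \<pi>'_def)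
      qed
    qed
    have allp: "\<forall>\<pi>'. is_play G \<pi>' \<and> \<pi>' 0 = ?\<rho> m \<and> consistent (own0 G) \<tau> \<pi>' \<longrightarrow>
              cost0 G (conc (pref \<pi> n) \<pi>') \<le> enat c \<or>
              cost1 G (conc (pref \<pi> n) \<pi>') > cost1 G \<pi>" using wp unfolding wprop_def by blast
    have "cost0 G (conc (pref \<pi> n) \<pi>') \<le> enat c \<or> cost1 G (conc (pref \<pi> n) \<pi>') > cost1 G \<pi>"
      using allp ppl pp0 pcons by blast
    then have "cost0 G ?\<rho> \<le> enat c \<or> cost1 G ?\<rho> > cost1 G \<pi>" unfolding ceq .
    then show ?thesis using le by (meson leD)
  qed
qed

lemma trich:
  fixes j n :: nat
  obtains "j < n" | "j = n" | k where "j = Suc n + k"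
proof -
  consider "j < n" | "j = n" | "n < j" by linarith
  then show ?thesis
  proof cases
    case 3 then have "j = Suc n + (j - Suc n)" by simp
    then show ?thesis using that(3) by blast
  qed (use that in auto)
qed

lemma fwd:
  assumes wf: "wf_game G" and sol: "NCNS_solution G c \<sigma>0"
  shows "\<exists>\<pi>. witness G c \<pi>"
proof -
  have st0: "is_strategy G (own0 G) \<sigma>0" using sol unfolding NCNS_solution_def by simp
  have NEc: "\<And>\<sigma>1. fixed_NE G \<sigma>0 \<sigma>1 \<Longrightarrow> cost0 G (out G \<sigma>0 \<sigma>1) \<le> enat c"
    using sol unfolding NCNS_solution_def by simp
  let ?P = "\<lambda>d. \<exists>\<tau>1. is_strategy G (own1 G) \<tau>1 \<and> d = cost1 G (out G \<sigma>0 \<tau>1)"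
  have "is_strategy G (own1 G) (\<lambda>h. succ G (last h))"
    unfolding is_strategy_def using succ_edge[OF wf path_last] by simp
  then have exP: "\<exists>d. ?P d" by blast
  define d where "d = (LEAST d. ?P d)"
  have "?P d" unfolding d_def using LeastI_ex[OF exP] .
  then obtain \<tau>s where tst: "is_strategy G (own1 G) \<tau>s" and dd: "d = cost1 G (out G \<sigma>0 \<tau>s)" by blast
  have dmin: "\<And>\<tau>1. is_strategy G (own1 G) \<tau>1 \<Longrightarrow> d \<le> cost1 G (out G \<sigma>0 \<tau>1)"
    unfolding d_def by (rule Least_le) blast
  define \<pi> where "\<pi> = out G \<sigma>0 \<tau>s"
  have "fixed_NE G \<sigma>0 \<tau>s" unfolding fixed_NE_def using tst dmin dd by simp
  then have c0: "cost0 G \<pi> \<le> enat c" using NEc unfolding \<pi>_def by blast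
  have pl: "is_play G \<pi>" unfolding \<pi>_def using out_play[OF wf st0 tst] .
  have p0: "\<pi> 0 = init G" unfolding \<pi>_def by (rule out_0)
  have pc: "consistent (own0 G) \<sigma>0 \<pi>" unfolding \<pi>_def by (rule out_consistent)
  have "witness G c \<pi>" unfolding witness_def
  proof (intro conjI allI impI)
    show "is_play G \<pi>" "\<pi> 0 = init G" "cost0 G \<pi> \<le> enat c" by fact+
    fix n v assume dev: "is_deviation G \<pi> n v"
    let ?h = "pref \<pi> n"
    define \<tau> where "\<tau> = (\<lambda>h'. if is_path G (?h @ h') then \<sigma>0 (?h @ h') else succ G (last h'))"
    have own1: "\<pi> n \<in> own1 G" using dev unfolding is_deviation_def by simp
    have vp: "is_path G (?h @ [v])" using dev unfolding is_deviation_def by simp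
    have evn: "(\<pi> n, v) \<in> edges G"
    proof -
      have "Suc n < length (?h @ [v])" by simp
      then have "((?h @ [v]) ! n, (?h @ [v]) ! Suc n) \<in> edges G" using vp unfolding is_path_def by blast
      then show ?thesis by (simp add: nth_append)
    qed
    show "\<exists>\<tau>. is_strategy G (own0 G) \<tau> \<and>
           (\<forall>\<pi>'. is_play G \<pi>' \<and> \<pi>' 0 = v \<and> consistent (own0 G) \<tau> \<pi>' \<longrightarrow>
              cost0 G (conc (pref \<pi> n) \<pi>') \<le> enat c \<or>
              cost1 G (conc (pref \<pi> n) \<pi>') > cost1 G \<pi>)"
    proof (intro exI conjI allI impI)
      show "is_strategy G (own0 G) \<tau>" unfolding is_strategy_def
      proof (intro allI impI)
        fix h' assume h': "is_path G h' \<and> last h' \<in> own0 G"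
        show "(last h', \<tau> h') \<in> edges G"
        proof (cases "is_path G (?h @ h')")
          case True
          moreover have "last (?h @ h') = last h'" using h' unfolding is_path_def by simp
          ultimately have "(last (?h @ h'), \<sigma>0 (?h @ h')) \<in> edges G"
            using st0[unfolded is_strategy_def, rule_format, of "?h @ h'"] h' by simp
          then show ?thesis using True \<open>last (?h @ h') = last h'\<close> unfolding \<tau>_def by simp
        next
          case False
          then show ?thesis using succ_edge[OF wf path_last] h' unfolding \<tau>_def by simp
        qed
      qed
      fix \<pi>' assume A: "is_play G \<pi>' \<and> \<pi>' 0 = v \<and> consistent (own0 G) \<tau> \<pi>'"
      define \<rho> where "\<rho> = conc ?h \<pi>'"
      have lh: "length ?h = Suc n" by simp
      have rlow: "\<And>j. j \<le> n \<Longrightarrow> \<rho> j = \<pi> j" unfolding \<rho>_def by (simp add: conc_def)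
      have rhigh: "\<And>k. \<rho> (Suc n + k) = \<pi>' k" unfolding \<rho>_def using conc_ge[of ?h \<pi>'] lh by simp
      have rpl: "is_play G \<rho>" unfolding is_play_def
      proof
        fix j
        consider "j < n" | "j = n" | k where "j = Suc n + k" by (rule trich)
        then show "\<rho> j \<in> verts G \<and> (\<rho> j, \<rho> (Suc j)) \<in> edges G"
        proof cases
          case 1 then show ?thesis using rlow[of j] rlow[of "Suc j"] pl unfolding is_play_def by simp
        next
          case 2
          have "\<pi> n \<in> verts G" using pl unfolding is_play_def by simp
          moreover have "\<rho> (Suc n) = v" using rhigh[of 0] A by simp
          ultimately show ?thesis using 2 rlow[of n] evn by simp
        next
          case 3
          have "\<rho> (Suc j) = \<pi>' (Suc k)" using rhigh[of "Suc k"] 3 by simp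
          then show ?thesis using 3 rhigh[of k] A unfolding is_play_def by simp
        qed
      qed
      have r0: "\<rho> 0 = init G" using rlow[of 0] p0 by simp
      have rc: "consistent (own0 G) \<sigma>0 \<rho>" unfolding consistent_def
      proof (intro allI impI)
        fix j assume jo: "\<rho> j \<in> own0 G"
        consider "j < n" | "j = n" | k where "j = Suc n + k" by (rule trich)
        then show "\<rho> (Suc j) = \<sigma>0 (pref \<rho> j)"
        proof cases
          case 1
          have "pref \<rho> j = pref \<pi> j" by (rule pref_cong) (use 1 rlow in simp)
          then show ?thesis using 1 rlow[of j] rlow[of "Suc j"] jo pc unfolding consistent_def by simp
        next
          case 2
          then show ?thesis using jo own1 rlow[of n] wf unfolding wf_game_def by auto
        next
          case 3
          have pr: "pref \<rho> j = ?h @ pref \<pi>' k" unfolding \<rho>_def using pref_conc[of ?h \<pi>' k] lh 3 by simp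
          have "\<pi>' k \<in> own0 G" using jo rhigh[of k] 3 by simp
          then have "\<pi>' (Suc k) = \<tau> (pref \<pi>' k)" using A unfolding consistent_def by simp
          also have "\<dots> = \<sigma>0 (pref \<rho> j)" using path_pref[OF rpl, of j] pr unfolding \<tau>_def by simp
          finally show ?thesis using rhigh[of "Suc k"] 3 by simp
        qed
      qed
      show "cost0 G (conc (pref \<pi> n) \<pi>') \<le> enat c \<or> cost1 G (conc (pref \<pi> n) \<pi>') > cost1 G \<pi>"
      proof (cases "cost1 G \<rho> > cost1 G \<pi>")
        case True then show ?thesis unfolding \<rho>_def by simp
      next
        case False
        then have le: "cost1 G \<rho> \<le> d" using dd unfolding \<pi>_def by simp
        have oe: "out G \<sigma>0 (follow G \<rho>) = \<rho>" using out_follow[OF r0 rc] .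
        have fs: "is_strategy G (own1 G) (follow G \<rho>)" using follow_strategy[OF wf rpl] .
        have "fixed_NE G \<sigma>0 (follow G \<rho>)" unfolding fixed_NE_def
        proof (intro conjI allI impI)
          show "is_strategy G (own1 G) (follow G \<rho>)" by fact
          fix \<tau>1 assume "is_strategy G (own1 G) \<tau>1"
          then have "d \<le> cost1 G (out G \<sigma>0 \<tau>1)" by (rule dmin)
          then show "cost1 G (out G \<sigma>0 (follow G \<rho>)) \<le> cost1 G (out G \<sigma>0 \<tau>1)" using oe le by simp
        qed
        then have "cost0 G (out G \<sigma>0 (follow G \<rho>)) \<le> enat c" by (rule NEc)
        then have "cost0 G \<rho> \<le> enat c" unfolding oe .
        then show ?thesis unfolding \<rho>_def by simp
      qed
    qed
  qed
  then show ?thesis by blast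
qed

theorem lemma27:
  fixes G :: "'v game" and c :: nat
  assumes "wf_game G"
  shows "(\<exists>\<sigma>0. NCNS_solution G c \<sigma>0) \<longleftrightarrow> (\<exists>\<pi>. witness G c \<pi>)"
  using fwd[OF assms] bwd[OF assms] by blast

end
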